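(* Let $h(x) := \log\Gamma(x)$ for $x>0$. For arbitrary $x>0$, \[ -\frac{1}{8x} - \frac{1}{24x(4x^2-1)_+} < h(x+1/2) - h(x) - \frac{\log x}{2} < -\frac{1}{8(x+1/2)} . \]
   Context: $(y)_+ := \max(y,0)$; for $0 < x \le 1/2$ the term $\frac{1}{24x(4x^2-1)_+}$ is interpreted as $+\infty$, so the lower bound is then $-\infty$. *)

theory Defs
  imports "HOL-Analysis.Analysis"
begin

end

theory Submission
  imports Defs "HOL-Real_Asymp.Real_Asymp"
begin

definition FF :: "real \<Rightarrow> real" where
  "FF y = ln (Gamma (y + 1/2)) - ln (Gamma y) - ln y / 2"

definition DD :: "real \<Rightarrow> real" where
  "DD y = (ln y + ln (y + 1)) / 2 - ln (y + 1/2)"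

lemma lnG_step: "(y::real) > 0 \<Longrightarrow> ln (Gamma (y + 1)) = ln y + ln (Gamma y)"
proof -
  assume y: "y > 0"
  have "Gamma (y + 1) = y * Gamma y" using y by (intro Gamma_plus1) (auto dest: nonpos_Ints_nonpos)
  moreover have g: "Gamma y > 0" using y by (rule Gamma_real_pos)
  ultimately show ?thesis using ln_mult_pos[OF y g] by simp
qed

lemma FF_step: "(y::real) > 0 \<Longrightarrow> FF y - FF (y + 1) = DD y"
proof -
  assume y: "y > 0"
  have a: "ln (Gamma (y + 1/2 + 1)) = ln (y + 1/2) + ln (Gamma (y + 1/2))"
    using y by (intro lnG_step) simp
  have b: "ln (Gamma (y + 1)) = ln y + ln (Gamma y)" using y by (rule lnG_step)
  have c: "y + 1 + 1/2 = y + 1/2 + 1" by simp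
  show ?thesis unfolding FF_def DD_def c a b by simp
qed

lemma FF_bounds:
  assumes y: "(y::real) > 0"
  shows "- 1 / (4 * y) \<le> FF y" "FF y \<le> 0"
proof -
  have cv: "convex_on {0<..} (ln \<circ> Gamma :: real \<Rightarrow> real)" by (rule log_convex_Gamma_real)
  have "(ln \<circ> Gamma) ((1 - 1/2) *\<^sub>R y + (1/2) *\<^sub>R (y+1))
        \<le> (1 - 1/2) * (ln \<circ> Gamma) y + (1/2) * (ln \<circ> Gamma) (y+1)"
    by (rule convex_onD[OF cv]) (use y in auto)
  moreover have "(1 - 1/2) *\<^sub>R y + (1/2) *\<^sub>R (y+1) = y + 1/2" by (simp add: field_simps)
  ultimately have 1: "ln (Gamma (y + 1/2)) \<le> ln (Gamma y) / 2 + ln (Gamma (y + 1)) / 2" by simp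
  have "(ln \<circ> Gamma) ((1 - 1/2) *\<^sub>R (y + 1/2) + (1/2) *\<^sub>R (y+1/2+1))
        \<le> (1 - 1/2) * (ln \<circ> Gamma) (y + 1/2) + (1/2) * (ln \<circ> Gamma) (y+1/2+1)"
    by (rule convex_onD[OF cv]) (use y in auto)
  moreover have "(1 - 1/2) *\<^sub>R (y + 1/2) + (1/2) *\<^sub>R (y+1/2+1) = y + 1" by (simp add: field_simps)
  ultimately have 2: "ln (Gamma (y + 1)) \<le> ln (Gamma (y+1/2)) / 2 + ln (Gamma (y + 1/2 + 1)) / 2" by simp
  have a: "ln (Gamma (y + 1/2 + 1)) = ln (y + 1/2) + ln (Gamma (y + 1/2))"
    using y by (intro lnG_step) simp
  have b: "ln (Gamma (y + 1)) = ln y + ln (Gamma y)" using y by (rule lnG_step)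
  show "FF y \<le> 0" using 1 b unfolding FF_def by linarith
  have "ln (y + 1/2) - ln y = ln (1 + 1/(2*y))"
  proof -
    have "(y + 1/2) / y = 1 + 1/(2*y)" using y by (simp add: field_simps)
    moreover have "ln ((y + 1/2) / y) = ln (y + 1/2) - ln y" using y by (simp add: ln_div)
    ultimately show ?thesis by simp
  qed
  also have "\<dots> \<le> 1/(2*y)" using y by (intro ln_add_one_self_le_self) simp
  finally have 3: "ln (y + 1/2) - ln y \<le> 1/(2*y)" .
  have "FF y \<ge> ln y / 2 - ln (y + 1/2) / 2" using 2 a b unfolding FF_def by linarith
  moreover have "ln y / 2 - ln (y + 1/2) / 2 \<ge> - 1 / (4 * y)" using 3 y by (simp add: field_simps)
  ultimately show "- 1 / (4 * y) \<le> FF y" by linarith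
qed

lemma FF_lim: "(x::real) > 0 \<Longrightarrow> (\<lambda>n. FF (x + real n)) \<longlonglongrightarrow> 0"
proof -
  assume x: "x > 0"
  have l: "(\<lambda>n. - 1 / (4 * (x + real n))) \<longlonglongrightarrow> 0"
    by real_asymp
  show ?thesis
    by (rule tendsto_sandwich[OF _ _ l tendsto_const])
       (use x FF_bounds[of "x + real _"] in \<open>auto intro!: always_eventually simp del: minus_divide_left\<close>)
qed

definition TT :: "real \<Rightarrow> real" where "TT y = 1 / (8 * (y + 1/2))"
definition GG :: "real \<Rightarrow> real" where "GG y = 1 / (8 * y) + 1 / (24 * y * (4 * y^2 - 1))"

lemma DD_ln: assumes y: "(y::real) > 0"
  shows "DD y = ln (y * (y+1) / (y+1/2)^2) / 2"
proof -
  have "ln (y * (y+1) / (y+1/2)^2) = ln (y * (y+1)) - ln ((y+1/2)^2)"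
    using y by (simp add: ln_div)
  also have "ln (y * (y+1)) = ln y + ln (y+1)" using y by (intro ln_mult_pos) auto
  also have "ln ((y+1/2)^2) = 2 * ln (y + 1/2)" using y by (simp add: ln_realpow)
  finally show ?thesis unfolding DD_def by simp
qed

lemma DD_upper: assumes y: "(y::real) > 0" shows "DD y < TT (y+1) - TT y"
proof -
  define w where "w = y * (y+1) / (y+1/2)^2"
  have wp: "w > 0" using y unfolding w_def by simp
  have "ln w \<le> w - 1" using wp by (rule ln_le_minus_one)
  moreover have "w - 1 = - 1 / (4 * (y+1/2)^2)"
  proof -
    have "(y+1/2)^2 > 0" using y by simp
    thus ?thesis unfolding w_def by (simp add: divide_simps) (simp add: power2_eq_square algebra_simps)
  qed
  moreover have "- 1 / (4 * (y+1/2)^2) / 2 < TT (y+1) - TT y"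
  proof -
    have p: "y + 1/2 > 0" "y + 3/2 > 0" using y by auto
    have e1: "TT (y+1) - TT y = - 1 / (8*(y+1/2)*(y+3/2))" unfolding TT_def using p
      by (simp add: divide_simps)
    have e2: "1/(8*(y+1/2)*(y+3/2)) < 1/(8*(y+1/2)*(y+1/2))"
      using p by (intro divide_strict_left_mono mult_strict_left_mono mult_pos_pos) auto
    have e3: "- 1 / (4 * (y+1/2)^2) / 2 = - (1/(8*(y+1/2)*(y+1/2)))"
      by (simp add: power2_eq_square)
    show ?thesis unfolding e1 e3 using e2 by simp
  qed
  ultimately show ?thesis using DD_ln[OF y] unfolding w_def by simp
qed

lemma DD_lower: assumes y: "(y::real) > 1/2" shows "GG (y+1) - GG y < DD y"
proof -
  define w where "w = (y+1/2)^2 / (y * (y+1))"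
  have wp: "w > 0" using y unfolding w_def by simp
  have k1: "ln w \<le> w - 1" using wp by (rule ln_le_minus_one)
  have k2: "w - 1 = 1 / (4 * y * (y+1))"
  proof -
    have "y * (y+1) > 0" "y \<noteq> 0" "1 + y \<noteq> 0" using y by auto
    thus ?thesis unfolding w_def by (simp add: divide_simps) (simp add: power2_eq_square algebra_simps)
  qed
  have k3: "ln w = - ln (y * (y+1) / (y+1/2)^2)" unfolding w_def using y
    by (simp add: ln_div)
  have h3: "1 / (24 * (y+1) * (4 * (y+1)^2 - 1)) < 1 / (24 * y * (4 * y^2 - 1))"
  proof (rule divide_strict_left_mono)
    have "4 * y^2 - 1 > 0" proof -
      have "(1/2)*(1/2) < y*y" using y by (intro mult_strict_mono) auto
      thus ?thesis by (simp add: power2_eq_square)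
    qed
    moreover have "(y+1)*(4*(y+1)^2-1) - y*(4*y^2-1) = 12*y^2+12*y+3"
      by (simp add: power2_eq_square algebra_simps)
    moreover have "y^2 \<ge> 0" by simp
    ultimately have q: "y*(4*y^2-1) < (y+1)*(4*(y+1)^2-1)" "0 < y*(4*y^2-1)" using y by auto
    show "0 < 24 * (y+1) * (4 * (y+1)^2 - 1) * (24 * y * (4 * y^2 - 1))"
    proof -
      have a: "0 < (y+1)*(4*(y+1)^2-1)" using q by linarith
      have "0 < (24*((y+1)*(4*(y+1)^2-1))) * (24*(y*(4*y^2-1)))"
        by (rule mult_pos_pos; rule mult_pos_pos) (use a q(2) in simp_all)
      thus ?thesis by (simp only: mult.assoc)
    qed
    show "24 * y * (4 * y^2 - 1) < 24 * (y+1) * (4 * (y+1)^2 - 1)"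
      using q by (simp add: algebra_simps)
  qed simp
  have h4: "1 / (8 * y) - 1 / (8 * (y+1)) = 1 / (8 * y * (y+1))" using y
    by (simp add: field_simps)
  have k5: "DD y = ln (y * (y+1) / (y+1/2)^2) / 2" using y by (intro DD_ln) simp
  have "- DD y = ln w / 2" using k3 k5 by simp
  also have "\<dots> \<le> (w - 1) / 2" using k1 by simp
  also have "\<dots> = 1 / (8 * y * (y+1))" using k2 by simp
  finally have h2: "- DD y \<le> 1 / (8 * y * (y+1))" .
  show ?thesis unfolding GG_def using h2 h3 h4 by linarith
qed

lemma FF_upper_ns: assumes x: "(x::real) > 0" shows "FF x \<le> - TT x"
proof -
  have I: "FF x \<le> TT (x + real n) - TT x + FF (x + real n)" for n
  proof (induction n)
    case (Suc n)
    have p: "x + real n > 0" using x by simp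
    have "FF (x + real n) = DD (x + real n) + FF (x + real n + 1)" using FF_step[OF p] by simp
    moreover have e: "x + real (Suc n) = x + real n + 1" by simp
    ultimately show ?case using DD_upper[OF p] Suc unfolding e by linarith
  qed simp
  have "(\<lambda>n. TT (x + real n) - TT x + FF (x + real n)) \<longlonglongrightarrow> 0 - TT x + 0"
  proof (intro tendsto_intros FF_lim x)
    show "(\<lambda>n. TT (x + real n)) \<longlonglongrightarrow> 0" unfolding TT_def by real_asymp
  qed
  hence "FF x \<le> 0 - TT x + 0" by (rule LIMSEQ_le_const) (use I in auto)
  thus ?thesis by simp
qed

lemma FF_lower_ns: assumes x: "(x::real) > 1/2" shows "- GG x \<le> FF x"
proof -
  have I: "GG (x + real n) - GG x + FF (x + real n) \<le> FF x" for n
  proof (induction n)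
    case (Suc n)
    have p: "x + real n > 0" "x + real n > 1/2" using x by auto
    have "FF (x + real n) = DD (x + real n) + FF (x + real n + 1)" using FF_step[OF p(1)] by simp
    moreover have e: "x + real (Suc n) = x + real n + 1" by simp
    ultimately show ?case using DD_lower[OF p(2)] Suc unfolding e by linarith
  qed simp
  have "(\<lambda>n. GG (x + real n) - GG x + FF (x + real n)) \<longlonglongrightarrow> 0 - GG x + 0"
  proof (intro tendsto_intros FF_lim)
    show "(\<lambda>n. GG (x + real n)) \<longlonglongrightarrow> 0" unfolding GG_def by real_asymp
  qed (use x in auto)
  hence "0 - GG x + 0 \<le> FF x" by (rule LIMSEQ_le_const2) (use I in auto)
  thus ?thesis by simp
qed

theorem lemma12:
  fixes x :: real
  assumes "x > 0"
  shows "(x > 1/2 \<longrightarrow>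
           - 1 / (8 * x) - 1 / (24 * x * (4 * x^2 - 1))
             < ln (Gamma (x + 1/2)) - ln (Gamma x) - ln x / 2)
       \<and> ln (Gamma (x + 1/2)) - ln (Gamma x) - ln x / 2 < - 1 / (8 * (x + 1/2))"
proof
  show "x > 1/2 \<longrightarrow>
           - 1 / (8 * x) - 1 / (24 * x * (4 * x^2 - 1))
             < ln (Gamma (x + 1/2)) - ln (Gamma x) - ln x / 2"
  proof
    assume x: "x > 1/2"
    have "FF x = DD x + FF (x + 1)" using FF_step assms by force
    moreover have "- GG (x+1) \<le> FF (x+1)" using x by (intro FF_lower_ns) simp
    ultimately have "- GG x < FF x" using DD_lower[OF x] by linarith
    thus "- 1 / (8 * x) - 1 / (24 * x * (4 * x^2 - 1))
             < ln (Gamma (x + 1/2)) - ln (Gamma x) - ln x / 2"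
      unfolding FF_def GG_def by simp
  qed
  have "FF x = DD x + FF (x + 1)" using FF_step assms by force
  moreover have "FF (x+1) \<le> - TT (x+1)" using assms by (intro FF_upper_ns) simp
  ultimately have "FF x < - TT x" using DD_upper[OF assms] by linarith
  thus "ln (Gamma (x + 1/2)) - ln (Gamma x) - ln x / 2 < - 1 / (8 * (x + 1/2))"
    unfolding FF_def TT_def by simp
qed

end
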